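(* A set $\mathcal{K}\subseteq\wp(\mathcal{G})$ is coherent if and only if there is a non-empty set $\mathfrak{D}$ whose members are non-empty sets of coherent sets of desirable gambles, such that $\mathfrak{D}$ is downwards closed (for all $\mathbb{D}_1,\mathbb{D}_2\in\mathfrak{D}$ there is $\mathbb{D}\in\mathfrak{D}$ with $\mathbb{D}\subseteq\mathbb{D}_1\cap\mathbb{D}_2$), and for all $B\subseteq\mathcal{G}$: $B\in\mathcal{K}$ iff there is some $\mathbb{D}\in\mathfrak{D}$ such that for every $D\in\mathbb{D}$, $B\cap D\neq\emptyset$.
   Context: $\Omega$ is a non-empty set and $\mathcal{G}$ is the set of bounded functions $\Omega\to\mathbb{R}$. $f\geq g$ means pointwise $\geq$; $f\gneq g$ means $f\geq g$ and $f\neq g$; $\mathcal{G}_{\gneq 0}=\{f: f\gneq 0\}$. $\mathrm{posi}(B)=\{\sum_{i=1}^m\lambda_i h_i: m\geq1,\lambda_i>0,h_i\in B\}$. A set $D\subseteq\mathcal{G}$ is coherent if $0\notin D$; $\mathcal{G}_{\gneq0}\subseteq D$; $\lambda g\in D$ whenever $g\in D,\lambda>0$; and $f+g\in D$ whenever $f,g\in D$. A set $\mathcal{K}\subseteq\wp(\mathcal{G})$ is coherent if: (K$_\emptyset$) $\emptyset\notin\mathcal{K}$; (K$_0$) if $A\in\mathcal{K}$ then $A\setminus\{0\}\in\mathcal{K}$; (K$_{\gneq0}$) if $g\in\mathcal{G}_{\gneq0}$ then $\{g\}\in\mathcal{K}$; (K$_\supseteq$) if $A\in\mathcal{K}$ and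 $B\supseteq A$ then $B\in\mathcal{K}$; (K$_{\mathrm{Dom}}$) if $A\in\mathcal{K}$ and for each $g\in A$, $f_g$ is a gamble with $f_g\geq g$, then $\{f_g: g\in A\}\in\mathcal{K}$; (K$_{\mathrm{Add}}$) if $A_1,\ldots,A_n\in\mathcal{K}$ (finitely many) and for each $\langle g_1,\ldots,g_n\rangle\in A_1\times\cdots\times A_n$, $f_{\langle g_1,\ldots,g_n\rangle}$ is some member of $\mathrm{posi}(\{g_1,\ldots,g_n\})$, then $\{f_{\langle g_1,\ldots,g_n\rangle}:\langle g_1,\ldots,g_n\rangle\in A_1\times\cdots\times A_n\}\in\mathcal{K}$. *)

theory Defs
  imports Complex_Main
begin

type_synonym 'o gamble = "'o \<Rightarrow> real"

definition gambles :: "'o gamble set" where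
  "gambles = {f. \<exists>c. \<forall>w. \<bar>f w\<bar> \<le> c}"

definition gneq :: "'o gamble \<Rightarrow> 'o gamble \<Rightarrow> bool" where
  "gneq f g \<longleftrightarrow> (\<forall>w. f w \<ge> g w) \<and> f \<noteq> g"

definition pos_gambles :: "'o gamble set" where
  "pos_gambles = {f \<in> gambles. gneq f (\<lambda>_. 0)}"

definition posi :: "'o gamble set \<Rightarrow> 'o gamble set" where
  "posi B = {f. \<exists>m::nat. \<exists>c h. m \<ge> 1 \<and> (\<forall>i<m. c i > (0::real) \<and> h i \<in> B)
                \<and> f = (\<lambda>w. \<Sum>i<m. c i * h i w)}"

definition coherent_D :: "'o gamble set \<Rightarrow> bool" where
  "coherent_D D \<longleftrightarrow> D \<subseteq> gambles \<and> (\<lambda>_. 0) \<notin> D \<and> pos_gambles \<subseteq> D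
     \<and> (\<forall>g\<in>D. \<forall>l::real. l > 0 \<longrightarrow> (\<lambda>w. l * g w) \<in> D)
     \<and> (\<forall>f\<in>D. \<forall>g\<in>D. (\<lambda>w. f w + g w) \<in> D)"

definition coherent_K :: "'o gamble set set \<Rightarrow> bool" where
  "coherent_K K \<longleftrightarrow> K \<subseteq> Pow gambles
     \<and> {} \<notin> K
     \<and> (\<forall>A\<in>K. A - {\<lambda>_. 0} \<in> K)
     \<and> (\<forall>g\<in>pos_gambles. {g} \<in> K)
     \<and> (\<forall>A\<in>K. \<forall>B. A \<subseteq> B \<and> B \<subseteq> gambles \<longrightarrow> B \<in> K)
     \<and> (\<forall>A\<in>K. \<forall>F. (\<forall>g\<in>A. F g \<in> gambles \<and> (\<forall>w. F g w \<ge> g w)) \<longrightarrow> F ` A \<in> K)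
     \<and> (\<forall>As F. As \<noteq> [] \<and> set As \<subseteq> K
           \<and> (\<forall>gs\<in>listset As. F gs \<in> posi (set gs))
           \<longrightarrow> F ` listset As \<in> K)"

end

theory Submission
  imports Defs
begin

lemma listset_meets: "gs \<in> listset As \<Longrightarrow> A \<in> set As \<Longrightarrow> \<exists>g\<in>set gs. g \<in> A"
proof (induction As arbitrary: gs)
  case Nil then show ?case by simp
next
  case (Cons B As)
  then obtain b xs where gs: "gs = b # xs" "b \<in> B" "xs \<in> listset As" by (auto simp: set_Cons_def)
  show ?case
  proof (cases "A = B")
    case True then show ?thesis using gs by auto
  next
    case False then have "A \<in> set As" using Cons.prems by simp
    then show ?thesis using Cons.IH gs by auto
  qed
qed

lemma listset_sub: "gs \<in> listset As \<Longrightarrow> set gs \<subseteq> \<Union>(set As)"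
proof (induction As arbitrary: gs)
  case Nil then show ?case by simp
next
  case (Cons B As)
  then obtain b xs where gs: "gs = b # xs" "b \<in> B" "xs \<in> listset As" by (auto simp: set_Cons_def)
  then show ?case using Cons.IH by auto
qed

lemma listset_pick: "(\<forall>A\<in>set As. A \<inter> D \<noteq> {}) \<Longrightarrow> \<exists>gs\<in>listset As. set gs \<subseteq> D"
proof (induction As)
  case Nil then show ?case by simp
next
  case (Cons A As)
  then obtain gs where "gs \<in> listset As" "set gs \<subseteq> D" by auto
  moreover obtain g where "g \<in> A" "g \<in> D" using Cons.prems by auto
  ultimately show ?case by (intro bexI[of _ "g#gs"]) (auto simp: set_Cons_def)
qed

lemma posi_closed:
  assumes sc: "\<And>g l. g \<in> C \<Longrightarrow> (l::real) > 0 \<Longrightarrow> (\<lambda>w. l * g w) \<in> C"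
    and ad: "\<And>f g. f \<in> C \<Longrightarrow> g \<in> C \<Longrightarrow> (\<lambda>w. f w + g w) \<in> C"
    and S: "S \<subseteq> C"
  shows "posi S \<subseteq> C"
proof
  fix f assume "f \<in> posi S"
  then obtain m c h where m: "(m::nat) \<ge> 1" "\<forall>i<m. c i > (0::real) \<and> h i \<in> S"
    and f: "f = (\<lambda>w. \<Sum>i<m. c i * h i w)" unfolding posi_def by (auto 0 0)
  have "(\<lambda>w. \<Sum>i<Suc k. c i * h i w) \<in> C" if "Suc k \<le> m" for k
    using that
  proof (induction k)
    case 0
    have "h 0 \<in> C" "c 0 > 0" using m S by auto
    then show ?case using sc by simp
  next
    case (Suc k)
    have "(\<lambda>w. \<Sum>i<Suc (Suc k). c i * h i w) = (\<lambda>w. (\<Sum>i<Suc k. c i * h i w) + c (Suc k) * h (Suc k) w)"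
      by simp
    also have "\<dots> \<in> C" apply (rule ad) using Suc.IH Suc.prems apply simp
    proof -
      have "h (Suc k) \<in> C" "c (Suc k) > 0" using m S Suc.prems by auto
      then show "(\<lambda>w. c (Suc k) * h (Suc k) w) \<in> C" using sc by simp
    qed
    finally show ?case .
  qed
  moreover obtain k where "m = Suc k" using m by (cases m) auto
  ultimately show "f \<in> C" using m f by auto
qed

lemma gambles_scale: "g \<in> gambles \<Longrightarrow> (l::real) > 0 \<Longrightarrow> (\<lambda>w. l * g w) \<in> gambles"
proof -
  assume "g \<in> gambles" "l > 0"
  then obtain c where c: "\<forall>w. \<bar>g w\<bar> \<le> c" unfolding gambles_def by auto
  have "\<forall>w. \<bar>l * g w\<bar> \<le> l * c" using c \<open>l>0\<close> by (simp add: abs_mult mult_left_mono)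
  then show ?thesis unfolding gambles_def by auto
qed

lemma gambles_add: "f \<in> gambles \<Longrightarrow> g \<in> gambles \<Longrightarrow> (\<lambda>w. f w + g w) \<in> gambles"
proof -
  assume "f \<in> gambles" "g \<in> gambles"
  then obtain c d where c: "\<forall>w. \<bar>f w\<bar> \<le> c" "\<forall>w. \<bar>g w\<bar> \<le> d" unfolding gambles_def by auto
  have "\<bar>f w + g w\<bar> \<le> c + d" for w
  proof -
    have "\<bar>f w + g w\<bar> \<le> \<bar>f w\<bar> + \<bar>g w\<bar>" by (rule abs_triangle_ineq)
    also have "\<dots> \<le> c + d" using c by (intro add_mono) auto
    finally show ?thesis .
  qed
  then show ?thesis unfolding gambles_def by auto
qed

lemma gambles_diff: "f \<in> gambles \<Longrightarrow> g \<in> gambles \<Longrightarrow> (\<lambda>w. f w - g w) \<in> gambles"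
proof -
  assume "f \<in> gambles" "g \<in> gambles"
  then obtain c d where c: "\<forall>w. \<bar>f w\<bar> \<le> c" "\<forall>w. \<bar>g w\<bar> \<le> d" unfolding gambles_def by auto
  have "\<bar>f w - g w\<bar> \<le> c + d" for w
  proof -
    have "\<bar>f w - g w\<bar> \<le> \<bar>f w\<bar> + \<bar>g w\<bar>" by (rule abs_triangle_ineq4)
    also have "\<dots> \<le> c + d" using c by (intro add_mono) auto
    finally show ?thesis .
  qed
  then show ?thesis unfolding gambles_def by auto
qed

lemma posi_gambles: "S \<subseteq> gambles \<Longrightarrow> posi S \<subseteq> gambles"
  by (rule posi_closed) (simp_all add: gambles_scale gambles_add)

lemma posi_coh:
  assumes D: "coherent_D D" and S: "S \<subseteq> D" shows "posi S \<subseteq> D"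
proof (rule posi_closed[OF _ _ S])
  fix g and l :: real assume "g \<in> D" "l > 0"
  then show "(\<lambda>w. l * g w) \<in> D" using D unfolding coherent_D_def by blast
next
  fix f g assume "f \<in> D" "g \<in> D"
  then show "(\<lambda>w. f w + g w) \<in> D" using D unfolding coherent_D_def by blast
qed

lemma sum_split: "(\<Sum>i<m+n. (g::nat\<Rightarrow>real) i) = (\<Sum>i<m. g i) + (\<Sum>i<n. g (m+i))"
  by (induct n) auto

lemma posi_add: "f \<in> posi S \<Longrightarrow> g \<in> posi S \<Longrightarrow> (\<lambda>w. f w + g w) \<in> posi S"
proof -
  assume "f \<in> posi S" "g \<in> posi S"
  then obtain m c h m2 c2 h2 where m: "(m::nat) \<ge> 1" "\<forall>i<m. c i > (0::real) \<and> h i \<in> S"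
    and f: "f = (\<lambda>w. \<Sum>i<m. c i * h i w)" and m2: "(m2::nat) \<ge> 1" "\<forall>i<m2. c2 i > (0::real) \<and> h2 i \<in> S"
    and g: "g = (\<lambda>w. \<Sum>i<m2. c2 i * h2 i w)" unfolding posi_def by (auto 0 0)
  define c' where "c' i = (if i < m then c i else c2 (i - m))" for i
  define h' where "h' i = (if i < m then h i else h2 (i - m))" for i
  have P: "\<forall>i<m+m2. c' i > 0 \<and> h' i \<in> S"
  proof (intro allI impI)
    fix i assume i: "i < m + m2"
    show "c' i > 0 \<and> h' i \<in> S"
    proof (cases "i < m")
      case True then show ?thesis using m by (simp add: c'_def h'_def)
    next
      case False then have "i - m < m2" using i by linarith
      then show ?thesis using m2 False by (simp add: c'_def h'_def)
    qed
  qed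
  have E: "(\<lambda>w. f w + g w) = (\<lambda>w. \<Sum>i<m+m2. c' i * h' i w)"
  proof
    fix w
    have "(\<Sum>i<m+m2. c' i * h' i w) = (\<Sum>i<m. c' i * h' i w) + (\<Sum>i<m2. c' (m+i) * h' (m+i) w)"
      by (rule sum_split)
    also have "(\<Sum>i<m. c' i * h' i w) = (\<Sum>i<m. c i * h i w)"
      by (rule sum.cong) (simp_all add: c'_def h'_def)
    also have "(\<Sum>i<m2. c' (m+i) * h' (m+i) w) = (\<Sum>i<m2. c2 i * h2 i w)"
      by (rule sum.cong) (simp_all add: c'_def h'_def)
    finally show "f w + g w = (\<Sum>i<m+m2. c' i * h' i w)" by (simp add: f g)
  qed
  have "m + m2 \<ge> 1" using m by simp
  then show ?thesis unfolding posi_def E using P by blast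
qed

lemma posi_scale: "f \<in> posi S \<Longrightarrow> (l::real) > 0 \<Longrightarrow> (\<lambda>w. l * f w) \<in> posi S"
proof -
  assume "f \<in> posi S" "l > 0"
  then obtain m c h where m: "(m::nat) \<ge> 1" "\<forall>i<m. c i > (0::real) \<and> h i \<in> S"
    and f: "f = (\<lambda>w. \<Sum>i<m. c i * h i w)" unfolding posi_def by (auto 0 0)
  have P: "\<forall>i<m. l * c i > 0 \<and> h i \<in> S" using m \<open>l > 0\<close> by simp
  have E: "(\<lambda>w. l * f w) = (\<lambda>w. \<Sum>i<m. (l * c i) * h i w)"
    by (simp add: f sum_distrib_left mult.assoc)
  show ?thesis unfolding posi_def E
    by (intro CollectI exI[of _ m] exI[of _ "\<lambda>i. l * c i"] exI[of _ h] conjI) (use P m(1) in auto)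
qed

lemma pos_gambles_sub: "pos_gambles \<subseteq> gambles" by (auto simp: pos_gambles_def)

lemma zero_gamble: "(\<lambda>_. 0) \<in> gambles" by (auto simp: gambles_def)

lemma pos_scale: "p \<in> pos_gambles \<Longrightarrow> (l::real) > 0 \<Longrightarrow> (\<lambda>w. l * p w) \<in> pos_gambles"
proof -
  assume p: "p \<in> pos_gambles" and l: "l > 0"
  have pne: "p \<noteq> (\<lambda>_. 0)" and pg: "p \<in> gambles" and pn: "\<forall>w. p w \<ge> 0"
    using p by (simp_all add: pos_gambles_def gneq_def)
  from pne obtain w where w: "p w \<noteq> 0" by (meson ext)
  have ne: "(\<lambda>w. l * p w) \<noteq> (\<lambda>_. 0)"
  proof
    assume eq: "(\<lambda>w. l * p w) = (\<lambda>_. 0)"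
    have "l * p w = 0" using fun_cong[OF eq, of w] by simp
    then show False using w l by simp
  qed
  have nn: "\<forall>w. l * p w \<ge> 0" using pn l by simp
  show ?thesis unfolding pos_gambles_def gneq_def using gambles_scale[OF pg l] nn ne by simp
qed

lemma pos_add: "p \<in> pos_gambles \<Longrightarrow> q \<in> pos_gambles \<Longrightarrow> (\<lambda>w. p w + q w) \<in> pos_gambles"
proof -
  assume p: "p \<in> pos_gambles" and q: "q \<in> pos_gambles"
  have pne: "p \<noteq> (\<lambda>_. 0)" and pg: "p \<in> gambles" and pn: "\<forall>w. p w \<ge> 0"
    using p by (simp_all add: pos_gambles_def gneq_def)
  have qg: "q \<in> gambles" and qn: "\<forall>w. q w \<ge> 0"
    using q by (simp_all add: pos_gambles_def gneq_def)
  from pne obtain w where w: "p w \<noteq> 0" by (meson ext)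
  have ne: "(\<lambda>w. p w + q w) \<noteq> (\<lambda>_. 0)"
  proof
    assume eq: "(\<lambda>w. p w + q w) = (\<lambda>_. 0)"
    have "p w + q w = 0" using fun_cong[OF eq, of w] by simp
    moreover have "p w \<ge> 0" "q w \<ge> 0" using pn qn by auto
    ultimately show False using w by linarith
  qed
  have nn: "\<forall>w. p w + q w \<ge> 0" using pn qn by (simp add: add_nonneg_nonneg)
  show ?thesis unfolding pos_gambles_def gneq_def using gambles_add[OF pg qg] nn ne by simp
qed

lemma dom_in:
  assumes D: "coherent_D D" and g: "g \<in> D" and f: "f \<in> gambles" and le: "\<forall>w. f w \<ge> g w"
  shows "f \<in> D"
proof (cases "f = g")
  case True then show ?thesis using g by simp
next
  case False
  have gg: "g \<in> gambles" using D g by (auto simp: coherent_D_def)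
  have ne: "(\<lambda>w. f w - g w) \<noteq> (\<lambda>_. 0)"
  proof
    assume eq: "(\<lambda>w. f w - g w) = (\<lambda>_. 0)"
    have "f = g"
    proof
      fix w show "f w = g w" using fun_cong[OF eq, of w] by simp
    qed
    then show False using False by simp
  qed
  have nn: "\<forall>w. f w - g w \<ge> 0" using le by simp
  have p: "(\<lambda>w. f w - g w) \<in> pos_gambles"
    unfolding pos_gambles_def gneq_def using gambles_diff[OF f gg] nn ne by simp
  have DP: "pos_gambles \<subseteq> D" and Dadd: "\<forall>f\<in>D. \<forall>g\<in>D. (\<lambda>w. f w + g w) \<in> D"
    using D by (simp_all add: coherent_D_def)
  have pD: "(\<lambda>w. f w - g w) \<in> D" using p DP by blast
  show ?thesis using Dadd[rule_format, OF g pD] by simp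
qed

lemma posi_single: "g \<in> S \<Longrightarrow> g \<in> posi S"
  unfolding posi_def by (rule CollectI, rule exI[of _ 1], rule exI[of _ "\<lambda>_. 1"], rule exI[of _ "\<lambda>_. g"]) auto

lemma list_down:
  assumes cl: "\<forall>\<D>1\<in>DD. \<forall>\<D>2\<in>DD. \<exists>\<D>\<in>DD. \<D> \<subseteq> \<D>1 \<inter> \<D>2"
  shows "As \<noteq> [] \<Longrightarrow> (\<forall>A\<in>set As. \<exists>\<D>\<in>DD. \<forall>D\<in>\<D>. A \<inter> D \<noteq> {})
     \<Longrightarrow> \<exists>\<D>\<in>DD. \<forall>A\<in>set As. \<forall>D\<in>\<D>. A \<inter> D \<noteq> {}"
proof (induction As)
  case Nil then show ?case by simp
next
  case (Cons A As)
  obtain \<D>2 where d2: "\<D>2 \<in> DD" "\<forall>D\<in>\<D>2. A \<inter> D \<noteq> {}" using Cons.prems by auto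
  show ?case
  proof (cases "As = []")
    case True then show ?thesis using d2 by auto
  next
    case False
    then obtain \<D>1 where d1: "\<D>1 \<in> DD" "\<forall>A\<in>set As. \<forall>D\<in>\<D>1. A \<inter> D \<noteq> {}" using Cons by auto
    then obtain \<D> where "\<D> \<in> DD" "\<D> \<subseteq> \<D>1 \<inter> \<D>2" using cl d2(1) by blast
    then show ?thesis using d1 d2 by (intro bexI[of _ \<D>]) auto
  qed
qed

lemma coh_zero: "coherent_D D \<Longrightarrow> (\<lambda>_. 0) \<notin> D" by (simp add: coherent_D_def)
lemma coh_pos: "coherent_D D \<Longrightarrow> g \<in> pos_gambles \<Longrightarrow> g \<in> D" unfolding coherent_D_def by blast

lemma bwd:
  fixes K :: "'o gamble set set"
  assumes KG: "K \<subseteq> Pow gambles"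
    and ne: "DD \<noteq> {}"
    and coh: "\<forall>\<D>\<in>DD. \<D> \<noteq> {} \<and> (\<forall>D\<in>\<D>. coherent_D D)"
    and cl: "\<forall>\<D>1\<in>DD. \<forall>\<D>2\<in>DD. \<exists>\<D>\<in>DD. \<D> \<subseteq> \<D>1 \<inter> \<D>2"
    and rep: "\<forall>B. B \<subseteq> gambles \<longrightarrow> (B \<in> K \<longleftrightarrow> (\<exists>\<D>\<in>DD. \<forall>D\<in>\<D>. B \<inter> D \<noteq> {}))"
  shows "coherent_K K"
proof -
  have mem1: "\<exists>\<D>\<in>DD. \<forall>D\<in>\<D>. B \<inter> D \<noteq> {}" if "B \<in> K" for B
  proof -
    have "B \<subseteq> gambles" using KG that by auto
    then show ?thesis using rep that by simp
  qed
  have mem2: "B \<in> K" if "B \<subseteq> gambles" "\<D> \<in> DD" "\<forall>D\<in>\<D>. B \<inter> D \<noteq> {}" for B \<D>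
  proof -
    have "\<exists>\<D>\<in>DD. \<forall>D\<in>\<D>. B \<inter> D \<noteq> {}" using that(3,2) by (rule bexI)
    then show ?thesis using rep that(1) by simp
  qed
  have cohD: "coherent_D D" if "\<D> \<in> DD" "D \<in> \<D>" for \<D> D
    using coh that by simp
  have c1: "{} \<notin> K"
  proof
    assume "{} \<in> K"
    then obtain \<D> where d: "\<D> \<in> DD" "\<forall>D\<in>\<D>. {} \<inter> D \<noteq> {}" using mem1 by blast
    have "\<D> \<noteq> {}" using coh d(1) by simp
    then show False using d(2) by simp
  qed
  have c2: "\<forall>A\<in>K. A - {\<lambda>_. 0} \<in> K"
  proof
    fix A assume A: "A \<in> K"
    then obtain \<D> where d: "\<D> \<in> DD" "\<forall>D\<in>\<D>. A \<inter> D \<noteq> {}" using mem1 by blast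
    have AG: "A \<subseteq> gambles" using KG A by auto
    have "\<forall>D\<in>\<D>. (A - {\<lambda>_. 0}) \<inter> D \<noteq> {}"
    proof
      fix D assume D: "D \<in> \<D>"
      have "(\<lambda>_. 0) \<notin> D" using cohD[OF d(1) D] by (rule coh_zero)
      moreover have "A \<inter> D \<noteq> {}" using d D by blast
      ultimately show "(A - {\<lambda>_. 0}) \<inter> D \<noteq> {}" by blast
    qed
    moreover have "A - {\<lambda>_. 0} \<subseteq> gambles" using AG by blast
    ultimately show "A - {\<lambda>_. 0} \<in> K" using mem2 d(1) by blast
  qed
  have c3: "\<forall>g\<in>pos_gambles. {g} \<in> K"
  proof
    fix g :: "'o gamble" assume g: "g \<in> pos_gambles"
    obtain \<D> where d: "\<D> \<in> DD" using ne by auto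
    have "\<forall>D\<in>\<D>. {g} \<inter> D \<noteq> {}"
    proof
      fix D assume "D \<in> \<D>"
      then have "g \<in> D" using coh_pos[OF cohD[OF d] g] by simp
      then show "{g} \<inter> D \<noteq> {}" by blast
    qed
    moreover have "{g} \<subseteq> gambles" using g pos_gambles_sub by blast
    ultimately show "{g} \<in> K" using mem2 d by blast
  qed
  have c4: "\<forall>A\<in>K. \<forall>B. A \<subseteq> B \<and> B \<subseteq> gambles \<longrightarrow> B \<in> K"
  proof (intro ballI allI impI)
    fix A B assume A: "A \<in> K" and AB: "A \<subseteq> B \<and> B \<subseteq> gambles"
    then obtain \<D> where d: "\<D> \<in> DD" "\<forall>D\<in>\<D>. A \<inter> D \<noteq> {}" using mem1 by blast
    then have "\<forall>D\<in>\<D>. B \<inter> D \<noteq> {}" using AB by blast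
    then show "B \<in> K" using mem2 d(1) AB by blast
  qed
  have c5: "\<forall>A\<in>K. \<forall>F. (\<forall>g\<in>A. F g \<in> gambles \<and> (\<forall>w. F g w \<ge> g w)) \<longrightarrow> F ` A \<in> K"
  proof (intro ballI allI impI)
    fix A and F :: "'o gamble \<Rightarrow> 'o gamble"
    assume A: "A \<in> K" and F: "\<forall>g\<in>A. F g \<in> gambles \<and> (\<forall>w. F g w \<ge> g w)"
    then obtain \<D> where d: "\<D> \<in> DD" "\<forall>D\<in>\<D>. A \<inter> D \<noteq> {}" using mem1 by blast
    have "\<forall>D\<in>\<D>. F ` A \<inter> D \<noteq> {}"
    proof
      fix D assume D: "D \<in> \<D>"
      then obtain g where g: "g \<in> A" "g \<in> D" using d by blast
      have "F g \<in> gambles" "\<forall>w. F g w \<ge> g w" using F g(1) by auto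
      then have "F g \<in> D" using dom_in[OF cohD[OF d(1) D] g(2)] by simp
      then show "F ` A \<inter> D \<noteq> {}" using g(1) by blast
    qed
    moreover have "F ` A \<subseteq> gambles" using F by auto
    ultimately show "F ` A \<in> K" using mem2 d(1) by blast
  qed
  have c6: "\<forall>As F. As \<noteq> [] \<and> set As \<subseteq> K \<and> (\<forall>gs\<in>listset As. F gs \<in> posi (set gs)) \<longrightarrow> F ` listset As \<in> K"
  proof (intro allI impI)
    fix As and F :: "'o gamble list \<Rightarrow> 'o gamble"
    assume h: "As \<noteq> [] \<and> set As \<subseteq> K \<and> (\<forall>gs\<in>listset As. F gs \<in> posi (set gs))"
    have hA: "As \<noteq> []" and hK: "set As \<subseteq> K" and hF: "\<forall>gs\<in>listset As. F gs \<in> posi (set gs)"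
      using h by simp_all
    have "\<forall>A\<in>set As. \<exists>\<D>\<in>DD. \<forall>D\<in>\<D>. A \<inter> D \<noteq> {}"
    proof
      fix A assume "A \<in> set As" then have "A \<in> K" using hK by blast
      then show "\<exists>\<D>\<in>DD. \<forall>D\<in>\<D>. A \<inter> D \<noteq> {}" by (rule mem1)
    qed
    then obtain \<D> where d: "\<D> \<in> DD" "\<forall>A\<in>set As. \<forall>D\<in>\<D>. A \<inter> D \<noteq> {}"
      using list_down[OF cl hA] by blast
    have "\<forall>D\<in>\<D>. F ` listset As \<inter> D \<noteq> {}"
    proof
      fix D assume D: "D \<in> \<D>"
      have "\<forall>A\<in>set As. A \<inter> D \<noteq> {}" using d(2) D by blast
      then obtain gs where gs: "gs \<in> listset As" "set gs \<subseteq> D" using listset_pick by blast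
      have "posi (set gs) \<subseteq> D" using posi_coh[OF cohD[OF d(1) D] gs(2)] .
      then have "F gs \<in> D" using hF gs(1) by blast
      then show "F ` listset As \<inter> D \<noteq> {}" using gs(1) by blast
    qed
    moreover have "F ` listset As \<subseteq> gambles"
    proof
      fix f assume "f \<in> F ` listset As"
      then obtain gs where gs: "gs \<in> listset As" "f = F gs" by blast
      have "\<Union>(set As) \<subseteq> gambles" using hK KG by blast
      then have "set gs \<subseteq> gambles" using listset_sub[OF gs(1)] by blast
      then have "posi (set gs) \<subseteq> gambles" by (rule posi_gambles)
      then show "f \<in> gambles" using hF gs by blast
    qed
    ultimately show "F ` listset As \<in> K" using mem2 d(1) by blast
  qed
  show ?thesis unfolding coherent_K_def
    by (intro conjI; (rule KG c1 c2 c3 c4 c5 c6)?)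
qed

lemma fwd_core:
  fixes K :: "'o gamble set set"
  assumes cK: "coherent_K K" and As: "As \<noteq> []" "set As \<subseteq> K" and B: "B \<subseteq> gambles"
    and H: "\<forall>D. coherent_D D \<and> (\<forall>A\<in>set As. A \<inter> D \<noteq> {}) \<longrightarrow> B \<inter> D \<noteq> {}"
  shows "B \<in> K"
proof -
  have KG: "K \<subseteq> Pow gambles" using cK by (simp add: coherent_K_def)
  have Kpos: "\<forall>g\<in>pos_gambles. {g} \<in> K" using cK by (simp add: coherent_K_def)
  have Ksup: "\<forall>A\<in>K. \<forall>B. A \<subseteq> B \<and> B \<subseteq> gambles \<longrightarrow> B \<in> K" using cK by (simp add: coherent_K_def)
  have K0: "\<forall>A\<in>K. A - {\<lambda>_. 0} \<in> K" using cK by (simp add: coherent_K_def)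
  have Kdom: "\<forall>A\<in>K. \<forall>F. (\<forall>g\<in>A. F g \<in> gambles \<and> (\<forall>w. F g w \<ge> g w)) \<longrightarrow> F ` A \<in> K"
    using cK by (simp add: coherent_K_def)
  have Kadd: "\<forall>As F. As \<noteq> [] \<and> set As \<subseteq> K \<and> (\<forall>gs\<in>listset As. F gs \<in> posi (set gs)) \<longrightarrow> F ` listset As \<in> K"
    using cK by (simp add: coherent_K_def)
  show ?thesis
  proof (cases "B \<inter> pos_gambles = {}")
    case False
    then obtain g where g: "g \<in> B" "g \<in> pos_gambles" by blast
    then have "{g} \<in> K" using Kpos by blast
    moreover have "{g} \<subseteq> B" using g by blast
    ultimately show ?thesis using Ksup B by blast
  next
    case True
    have claim: "\<exists>h. h \<in> posi (set gs) \<and> ((\<forall>w. h w \<le> 0) \<or> (\<exists>b\<in>B. \<forall>w. h w \<le> b w))"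
      if gs: "gs \<in> listset As" for gs
    proof (rule ccontr)
      assume nc: "\<not> ?thesis"
      define E where "E = {f\<in>gambles. \<exists>h\<in>posi (set gs). \<forall>w. h w \<le> f w} \<union> pos_gambles"
      have sg: "set gs \<subseteq> gambles"
      proof -
        have "\<Union>(set As) \<subseteq> gambles" using As(2) KG by blast
        then show ?thesis using listset_sub[OF gs] by blast
      qed
      have Ecases: "x \<in> gambles \<and> ((\<forall>w. x w \<ge> 0) \<and> x \<in> pos_gambles \<or> (\<exists>h\<in>posi (set gs). \<forall>w. h w \<le> x w))"
        if "x \<in> E" for x
        using that pos_gambles_sub unfolding E_def by (auto simp: pos_gambles_def gneq_def)
      have e1: "E \<subseteq> gambles" using Ecases by blast
      have e2: "(\<lambda>_. 0) \<notin> E"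
      proof
        assume z: "(\<lambda>_. 0) \<in> E"
        have "(\<lambda>_. 0::real) \<notin> pos_gambles" by (simp add: pos_gambles_def gneq_def)
        then obtain h where "h \<in> posi (set gs)" "\<forall>w. h w \<le> 0" using z unfolding E_def by auto
        then show False using nc by blast
      qed
      have e3: "pos_gambles \<subseteq> E" by (auto simp: E_def)
      have e4: "\<forall>g\<in>E. \<forall>l::real. l > 0 \<longrightarrow> (\<lambda>w. l * g w) \<in> E"
      proof (intro ballI allI impI)
        fix g and l :: real assume g: "g \<in> E" and l: "l > 0"
        show "(\<lambda>w. l * g w) \<in> E"
        proof (cases "g \<in> pos_gambles")
          case True then show ?thesis using pos_scale[OF True l] by (auto simp: E_def)
        next
          case False
          then obtain h where h: "g \<in> gambles" "h \<in> posi (set gs)" "\<forall>w. h w \<le> g w"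
            using g by (auto simp: E_def)
          have "(\<lambda>w. l * h w) \<in> posi (set gs)" using posi_scale[OF h(2) l] .
          moreover have "\<forall>w. l * h w \<le> l * g w" using h(3) l by (simp add: mult_left_mono)
          ultimately have ex: "\<exists>h'\<in>posi (set gs). \<forall>w. h' w \<le> l * g w"
            by (intro bexI[of _ "\<lambda>w. l * h w"]) simp_all
          then show ?thesis using gambles_scale[OF h(1) l] unfolding E_def by blast
        qed
      qed
      have e5: "\<forall>f\<in>E. \<forall>g\<in>E. (\<lambda>w. f w + g w) \<in> E"
      proof (intro ballI)
        fix f g assume f: "f \<in> E" and g: "g \<in> E"
        have fg: "(\<lambda>w. f w + g w) \<in> gambles" using Ecases[OF f] Ecases[OF g] gambles_add by blast
        show "(\<lambda>w. f w + g w) \<in> E"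
        proof (cases "f \<in> pos_gambles \<and> g \<in> pos_gambles")
          case True then show ?thesis using pos_add by (auto simp: E_def)
        next
          case False
          have "\<exists>h\<in>posi (set gs). \<forall>w. h w \<le> f w + g w"
          proof (cases "\<exists>h\<in>posi (set gs). \<forall>w. h w \<le> f w")
            case hf: True
            then obtain h1 where h1: "h1 \<in> posi (set gs)" "\<forall>w. h1 w \<le> f w" by blast
            show ?thesis
            proof (cases "\<exists>h\<in>posi (set gs). \<forall>w. h w \<le> g w")
              case True
              then obtain h2 where h2: "h2 \<in> posi (set gs)" "\<forall>w. h2 w \<le> g w" by blast
              have "(\<lambda>w. h1 w + h2 w) \<in> posi (set gs)" using posi_add[OF h1(1) h2(1)] .
              moreover have "\<forall>w. h1 w + h2 w \<le> f w + g w" using h1(2) h2(2) by (simp add: add_mono)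
              ultimately show ?thesis by (intro bexI[of _ "\<lambda>w. h1 w + h2 w"]) simp_all
            next
              case False
              then have "\<forall>w. g w \<ge> 0" using Ecases[OF g] by blast
              then have "\<forall>w. h1 w \<le> f w + g w" using h1(2) by (smt (verit))
              then show ?thesis using h1(1) by blast
            qed
          next
            case hf: False
            then have f0: "\<forall>w. f w \<ge> 0" "f \<in> pos_gambles" using Ecases[OF f] by blast+
            then have "\<not> g \<in> pos_gambles" using False by blast
            then obtain h2 where h2: "h2 \<in> posi (set gs)" "\<forall>w. h2 w \<le> g w" using Ecases[OF g] by blast
            then have "\<forall>w. h2 w \<le> f w + g w" using f0(1) by (smt (verit))
            then show ?thesis using h2(1) by blast
          qed
          then show ?thesis using fg unfolding E_def by blast
        qed
      qed
      have cE: "coherent_D E" unfolding coherent_D_def using e1 e2 e3 e4 e5 by blast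
      have "\<forall>A\<in>set As. A \<inter> E \<noteq> {}"
      proof
        fix A assume A: "A \<in> set As"
        obtain g where g: "g \<in> set gs" "g \<in> A" using listset_meets[OF gs A] by blast
        have "g \<in> posi (set gs)" using g(1) by (rule posi_single)
        moreover have "g \<in> gambles" using sg g(1) by blast
        moreover have "\<forall>w. g w \<le> g w" by simp
        ultimately have "g \<in> E" unfolding E_def by blast
        then show "A \<inter> E \<noteq> {}" using g(2) by blast
      qed
      then have "B \<inter> E \<noteq> {}" using H cE by blast
      then obtain b where b: "b \<in> B" "b \<in> E" by blast
      then have "b \<notin> pos_gambles" using True by blast
      then obtain h where "h \<in> posi (set gs)" "\<forall>w. h w \<le> b w" using b(2) unfolding E_def by blast
      then show False using nc b(1) by blast
    qed
    define F where "F gs = (SOME h. h \<in> posi (set gs) \<and> ((\<forall>w. h w \<le> 0) \<or> (\<exists>b\<in>B. \<forall>w. h w \<le> b w)))" for gs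
    have Fp: "F gs \<in> posi (set gs) \<and> ((\<forall>w. F gs w \<le> 0) \<or> (\<exists>b\<in>B. \<forall>w. F gs w \<le> b w))"
      if "gs \<in> listset As" for gs
      unfolding F_def using someI_ex[OF claim[OF that]] .
    have K1: "F ` listset As \<in> K" using Kadd As Fp by blast
    define G where "G f = (if \<exists>b\<in>B. \<forall>w. f w \<le> b w then SOME b. b \<in> B \<and> (\<forall>w. f w \<le> b w) else (\<lambda>_. 0))"
      for f :: "'o gamble"
    have Gp: "(G f \<in> gambles \<and> (\<forall>w. G f w \<ge> f w)) \<and> G f \<in> B \<union> {\<lambda>_. 0}" if f: "f \<in> F ` listset As" for f
    proof (cases "\<exists>b\<in>B. \<forall>w. f w \<le> b w")
      case True
      then have "\<exists>b. b \<in> B \<and> (\<forall>w. f w \<le> b w)" by blast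
      from someI_ex[OF this] have "G f \<in> B \<and> (\<forall>w. f w \<le> G f w)" unfolding G_def using True by simp
      then show ?thesis using B by blast
    next
      case False
      obtain gs where gs: "gs \<in> listset As" "f = F gs" using f by blast
      then have "\<forall>w. f w \<le> 0" using Fp[OF gs(1)] False by blast
      moreover have "G f = (\<lambda>_. 0)" unfolding G_def by (rule if_not_P[OF False])
      ultimately show ?thesis using zero_gamble by simp
    qed
    have "\<forall>f\<in>F ` listset As. G f \<in> gambles \<and> (\<forall>w. G f w \<ge> f w)" using Gp by blast
    then have K2: "G ` F ` listset As \<in> K" using Kdom K1 by blast
    then have K3: "G ` F ` listset As - {\<lambda>_. 0} \<in> K" using K0 by blast
    have "G ` F ` listset As - {\<lambda>_. 0} \<subseteq> B" using Gp by blast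
    then show ?thesis using Ksup K3 B by blast
  qed
qed

theorem mainTheorem10:
  fixes K :: "'o gamble set set"
  assumes "K \<subseteq> Pow gambles"
  shows "coherent_K K \<longleftrightarrow>
    (\<exists>\<DD> :: 'o gamble set set set.
       \<DD> \<noteq> {}
       \<and> (\<forall>\<D>\<in>\<DD>. \<D> \<noteq> {} \<and> (\<forall>D\<in>\<D>. coherent_D D))
       \<and> (\<forall>\<D>1\<in>\<DD>. \<forall>\<D>2\<in>\<DD>. \<exists>\<D>\<in>\<DD>. \<D> \<subseteq> \<D>1 \<inter> \<D>2)
       \<and> (\<forall>B. B \<subseteq> gambles \<longrightarrow> (B \<in> K \<longleftrightarrow> (\<exists>\<D>\<in>\<DD>. \<forall>D\<in>\<D>. B \<inter> D \<noteq> {}))))"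
proof
  assume cK: "coherent_K K"
  define DS where "DS As = {D. coherent_D D \<and> (\<forall>A\<in>set As. A \<inter> D \<noteq> {})}" for As :: "'o gamble set list"
  define DD where "DD = {DS As | As. As \<noteq> [] \<and> set As \<subseteq> K}"
  have K1: "{} \<notin> K" using cK by (simp add: coherent_K_def)
  have Kpos: "\<forall>g\<in>pos_gambles. {g} \<in> K" using cK by (simp add: coherent_K_def)
  have KG: "K \<subseteq> Pow gambles" using cK by (simp add: coherent_K_def)
  have one: "(\<lambda>_. 1::real) \<in> pos_gambles"
  proof -
    have "(\<lambda>_. 1::real) \<noteq> (\<lambda>_. 0)"
    proof
      assume "(\<lambda>_. 1::real) = (\<lambda>_. 0)"
      then have "(1::real) = 0" by (rule fun_cong)
      then show False by simp
    qed
    moreover have "(\<lambda>_. 1::real) \<in> gambles" unfolding gambles_def by auto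
    ultimately show ?thesis unfolding pos_gambles_def gneq_def by simp
  qed
  have ne: "DD \<noteq> {}"
  proof -
    have "{\<lambda>_. 1} \<in> K" using Kpos one by blast
    then have "DS [{\<lambda>_. 1}] \<in> DD" unfolding DD_def by auto
    then show ?thesis by blast
  qed
  have coh: "\<forall>\<D>\<in>DD. \<D> \<noteq> {} \<and> (\<forall>D\<in>\<D>. coherent_D D)"
  proof
    fix \<D> assume "\<D> \<in> DD"
    then obtain As where As: "\<D> = DS As" "As \<noteq> []" "set As \<subseteq> K" unfolding DD_def by blast
    have "DS As \<noteq> {}"
    proof
      assume e: "DS As = {}"
      have "\<forall>D. coherent_D D \<and> (\<forall>A\<in>set As. A \<inter> D \<noteq> {}) \<longrightarrow> {} \<inter> D \<noteq> {}"
        using e unfolding DS_def by blast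
      then have "{} \<in> K" using fwd_core[OF cK As(2,3)] by blast
      then show False using K1 by blast
    qed
    moreover have "\<forall>D\<in>DS As. coherent_D D" unfolding DS_def by blast
    ultimately show "\<D> \<noteq> {} \<and> (\<forall>D\<in>\<D>. coherent_D D)" using As(1) by simp
  qed
  have cl: "\<forall>\<D>1\<in>DD. \<forall>\<D>2\<in>DD. \<exists>\<D>\<in>DD. \<D> \<subseteq> \<D>1 \<inter> \<D>2"
  proof (intro ballI)
    fix \<D>1 \<D>2 assume "\<D>1 \<in> DD" "\<D>2 \<in> DD"
    then obtain As1 As2 where A1: "\<D>1 = DS As1" "As1 \<noteq> []" "set As1 \<subseteq> K"
      and A2: "\<D>2 = DS As2" "As2 \<noteq> []" "set As2 \<subseteq> K" unfolding DD_def by blast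
    have "As1 @ As2 \<noteq> [] \<and> set (As1 @ As2) \<subseteq> K" using A1 A2 by simp
    then have "DS (As1 @ As2) \<in> DD" unfolding DD_def by blast
    moreover have "DS (As1 @ As2) \<subseteq> \<D>1 \<inter> \<D>2" using A1(1) A2(1) unfolding DS_def by auto
    ultimately show "\<exists>\<D>\<in>DD. \<D> \<subseteq> \<D>1 \<inter> \<D>2" by blast
  qed
  have rep: "\<forall>B. B \<subseteq> gambles \<longrightarrow> (B \<in> K \<longleftrightarrow> (\<exists>\<D>\<in>DD. \<forall>D\<in>\<D>. B \<inter> D \<noteq> {}))"
  proof (intro allI impI iffI)
    fix B assume B: "B \<subseteq> gambles" "B \<in> K"
    then have "DS [B] \<in> DD" unfolding DD_def by auto
    moreover have "\<forall>D\<in>DS [B]. B \<inter> D \<noteq> {}" unfolding DS_def by auto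
    ultimately show "\<exists>\<D>\<in>DD. \<forall>D\<in>\<D>. B \<inter> D \<noteq> {}" by blast
  next
    fix B assume B: "B \<subseteq> gambles" and ex: "\<exists>\<D>\<in>DD. \<forall>D\<in>\<D>. B \<inter> D \<noteq> {}"
    then obtain As where As: "As \<noteq> []" "set As \<subseteq> K" "\<forall>D\<in>DS As. B \<inter> D \<noteq> {}"
      unfolding DD_def by blast
    have "\<forall>D. coherent_D D \<and> (\<forall>A\<in>set As. A \<inter> D \<noteq> {}) \<longrightarrow> B \<inter> D \<noteq> {}"
      using As(3) unfolding DS_def by blast
    then show "B \<in> K" using fwd_core[OF cK As(1,2) B] by blast
  qed
  show "\<exists>\<DD> :: 'o gamble set set set.
       \<DD> \<noteq> {}
       \<and> (\<forall>\<D>\<in>\<DD>. \<D> \<noteq> {} \<and> (\<forall>D\<in>\<D>. coherent_D D))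
       \<and> (\<forall>\<D>1\<in>\<DD>. \<forall>\<D>2\<in>\<DD>. \<exists>\<D>\<in>\<DD>. \<D> \<subseteq> \<D>1 \<inter> \<D>2)
       \<and> (\<forall>B. B \<subseteq> gambles \<longrightarrow> (B \<in> K \<longleftrightarrow> (\<exists>\<D>\<in>\<DD>. \<forall>D\<in>\<D>. B \<inter> D \<noteq> {})))"
    using ne coh cl rep by blast
next
  assume "\<exists>\<DD> :: 'o gamble set set set.
       \<DD> \<noteq> {}
       \<and> (\<forall>\<D>\<in>\<DD>. \<D> \<noteq> {} \<and> (\<forall>D\<in>\<D>. coherent_D D))
       \<and> (\<forall>\<D>1\<in>\<DD>. \<forall>\<D>2\<in>\<DD>. \<exists>\<D>\<in>\<DD>. \<D> \<subseteq> \<D>1 \<inter> \<D>2)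
       \<and> (\<forall>B. B \<subseteq> gambles \<longrightarrow> (B \<in> K \<longleftrightarrow> (\<exists>\<D>\<in>\<DD>. \<forall>D\<in>\<D>. B \<inter> D \<noteq> {})))"
  then obtain DD :: "'o gamble set set set" where h: "DD \<noteq> {}"
       "\<forall>\<D>\<in>DD. \<D> \<noteq> {} \<and> (\<forall>D\<in>\<D>. coherent_D D)"
       "\<forall>\<D>1\<in>DD. \<forall>\<D>2\<in>DD. \<exists>\<D>\<in>DD. \<D> \<subseteq> \<D>1 \<inter> \<D>2"
       "\<forall>B. B \<subseteq> gambles \<longrightarrow> (B \<in> K \<longleftrightarrow> (\<exists>\<D>\<in>DD. \<forall>D\<in>\<D>. B \<inter> D \<noteq> {}))"
    by (elim exE conjE) blast
  show "coherent_K K" using bwd[OF assms h] .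
qed

end
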